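(* Let $((A_i,B_i))_{i\in\mathbb N}$ be a strictly increasing sequence of oriented separations of a graph $G$ such that $G[B_i]$ is connected for every $i$, and let $\{C,D\}$ be a separation of $G$ of finite order. If the sequence is exhaustive (i.e. $\bigcap_iB_i=\emptyset$), then there is $I\in\mathbb N$ such that either $(C,D)\le(A_i,B_i)$ for all $i\ge I$, or $(D,C)\le(A_i,B_i)$ for all $i\ge I$.
   Context: A separation of $G$ is an unordered pair $\{A,B\}$ of subsets of $V(G)$ with $A\cup B=V(G)$ and no edge between $A\setminus B$ and $B\setminus A$; its order is $|A\cap B|$. Oriented separations are ordered by $(A,B)\le(C,D)$ iff $A\subseteq C$ and $B\supseteq D$. *)

theory Defs
  imports Main
begin

definition graph :: "'a set \<Rightarrow> ('a \<Rightarrow> 'a \<Rightarrow> bool) \<Rightarrow> bool" where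
  "graph V E \<longleftrightarrow> (\<forall>u v. E u v \<longrightarrow> u \<in> V \<and> v \<in> V \<and> E v u \<and> u \<noteq> v)"

definition separation :: "'a set \<Rightarrow> ('a \<Rightarrow> 'a \<Rightarrow> bool) \<Rightarrow> 'a set \<Rightarrow> 'a set \<Rightarrow> bool" where
  "separation V E A B \<longleftrightarrow> A \<union> B = V \<and> (\<forall>u\<in>A - B. \<forall>v\<in>B - A. \<not> E u v)"

definition sep_le :: "'a set \<times> 'a set \<Rightarrow> 'a set \<times> 'a set \<Rightarrow> bool" where
  "sep_le S T \<longleftrightarrow> fst S \<subseteq> fst T \<and> snd T \<subseteq> snd S"

definition sep_less :: "'a set \<times> 'a set \<Rightarrow> 'a set \<times> 'a set \<Rightarrow> bool" where
  "sep_less S T \<longleftrightarrow> sep_le S T \<and> S \<noteq> T"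

definition induced_connected :: "'a set \<Rightarrow> ('a \<Rightarrow> 'a \<Rightarrow> bool) \<Rightarrow> 'a set \<Rightarrow> bool" where
  "induced_connected V E X \<longleftrightarrow> X \<subseteq> V \<and> X \<noteq> {} \<and>
     (\<forall>x\<in>X. \<forall>y\<in>X. (\<lambda>u v. u \<in> X \<and> v \<in> X \<and> E u v)\<^sup>*\<^sup>* x y)"

end

theory Submission
  imports Defs
begin

lemma conn_side:
  assumes sep: "\<forall>u\<in>C - D. \<forall>v\<in>D - C. \<not> E u v"
    and sub: "X \<subseteq> C \<union> D" and dis: "X \<inter> (C \<inter> D) = {}"
    and path: "(\<lambda>u v. u \<in> X \<and> v \<in> X \<and> E u v)\<^sup>*\<^sup>* x y"
    and x: "x \<in> C - D"
  shows "y \<in> C - D"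
  using path x
proof (induction rule: rtranclp_induct)
  case base then show ?case by simp
next
  case (step y z)
  then show ?case using sep sub dis by blast
qed

theorem mainTheorem9:
  fixes V :: "'a set" and E :: "'a \<Rightarrow> 'a \<Rightarrow> bool"
    and A B :: "nat \<Rightarrow> 'a set" and C D :: "'a set"
  assumes "graph V E"
    and "\<forall>i. separation V E (A i) (B i)"
    and "\<forall>i j. i < j \<longrightarrow> sep_less (A i, B i) (A j, B j)"
    and "\<forall>i. induced_connected V E (B i)"
    and "separation V E C D"
    and "finite (C \<inter> D)"
    and "(\<Inter>i. B i) = {}"
  shows "\<exists>I. (\<forall>i\<ge>I. sep_le (C, D) (A i, B i)) \<or> (\<forall>i\<ge>I. sep_le (D, C) (A i, B i))"
proof -
  have mono: "B j \<subseteq> B i" if "i \<le> j" for i j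
  proof (cases "i = j")
    case False
    then have "i < j" using that by simp
    then show ?thesis using assms(3) by (auto simp: sep_less_def sep_le_def)
  qed simp
  have ev: "\<forall>y\<in>C \<inter> D. eventually (\<lambda>i. y \<notin> B i) sequentially"
  proof
    fix y assume "y \<in> C \<inter> D"
    from assms(7) obtain k where "y \<notin> B k" by blast
    then show "eventually (\<lambda>i. y \<notin> B i) sequentially"
      unfolding eventually_sequentially using mono by blast
  qed
  have "eventually (\<lambda>i. \<forall>y\<in>C \<inter> D. y \<notin> B i) sequentially"
    by (rule eventually_ball_finite[OF assms(6) ev])
  then obtain I where I: "\<And>i y. i \<ge> I \<Longrightarrow> y \<in> C \<inter> D \<Longrightarrow> y \<notin> B i"
    unfolding eventually_sequentially by blast
  have CD: "C \<union> D = V" "\<forall>u\<in>C - D. \<forall>v\<in>D - C. \<not> E u v"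
    using assms(5) by (auto simp: separation_def)
  have AB: "A i \<union> B i = V" for i using assms(2) by (auto simp: separation_def)
  have conn: "B I \<subseteq> V" "B I \<noteq> {}"
    "\<forall>x\<in>B I. \<forall>y\<in>B I. (\<lambda>u v. u \<in> B I \<and> v \<in> B I \<and> E u v)\<^sup>*\<^sup>* x y"
    using assms(4) by (auto simp: induced_connected_def)
  have dis: "B I \<inter> (C \<inter> D) = {}" using I by blast
  obtain x where x: "x \<in> B I" using conn(2) by blast
  have sepDC: "\<forall>u\<in>D - C. \<forall>v\<in>C - D. \<not> E u v"
    using assms(1) CD(2) unfolding graph_def by blast
  show ?thesis
  proof (cases "x \<in> C - D")
    case True
    have "B I \<subseteq> C - D"
    proof
      fix y assume "y \<in> B I"
      then show "y \<in> C - D"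
        using conn_side[OF CD(2) _ dis _ True] conn(1,3) x CD(1) by blast
    qed
    then have "\<forall>i\<ge>I. sep_le (D, C) (A i, B i)"
      using mono AB CD(1) by (fastforce simp: sep_le_def)
    then show ?thesis by blast
  next
    case False
    then have xD: "x \<in> D - C" using x dis conn(1) CD(1) by blast
    have "B I \<subseteq> D - C"
    proof
      fix y assume "y \<in> B I"
      then show "y \<in> D - C"
        using conn_side[OF sepDC _ _ _ xD, of "B I"] conn(1,3) x CD(1) dis by blast
    qed
    then have "\<forall>i\<ge>I. sep_le (C, D) (A i, B i)"
      using mono AB CD(1) by (fastforce simp: sep_le_def)
    then show ?thesis by blast
  qed
qed

end
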